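(* Let $G$ be a connected $m$-uniform hypergraph on $n$ vertices. Suppose its incidence matrix $B_G$ has Smith normal form over $\mathbb{Z}_m$ with nonzero diagonal entries $d_1,\dots,d_r$. Then $|\mathbb{PV}_0(\mathcal{L}(G))|=s(\mathcal{L}(G))=s(\mathcal{A}(G))=m^{n-1-r}\prod_{i=1}^r d_i$.
   Context: An $m$-uniform hypergraph $G$ on vertices $v_1,\dots,v_n$ has edges that are $m$-subsets; it is connected in the usual sense. Adjacency tensor $\mathcal{A}(G)$: order $m$, dimension $n$, entry $\frac1{(m-1)!}$ at $(i_1,\dots,i_m)$ if $\{v_{i_1},\dots,v_{i_m}\}$ is an edge, $0$ otherwise. $\mathcal{L}(G)=\mathcal{D}(G)-\mathcal{A}(G)$, where $\mathcal{D}(G)$ is diagonal with the vertex degrees. Incidence matrix $B_G$: rows indexed by edges, columns by vertices, $b_{e,v}=1$ if $v\in e$, else $0$. Smith normal form over $\mathbb{Z}_m$: invertible $P,Q$ over $\mathbb{Z}_m$ with $PB_GQ$ diagonal with entries $d_1,\dots,d_r,0,\dots,0$, $1\le d_i\le m-1$, $d_i\mid d_{i+1}$, $d_i\mid m$. For a tensor $\mathcal{T}$, $(\mathcal{T}x^{m-1})_i=\sum_{i_2,\dots,i_m}t_{ii_2\cdots i_m}x_{i_2}\cdots x_{i_m}$ and $\mathbb{PV}_\lambda(\mathcal{T})=\{x\in\mathbb{P}^{n-1}:\mathcal{T}x^{m-1}=\lambda x^{[m-1]}\}$ with $x^{[m-1]}=(x_i^{m-1})$. Stabilizing index: $s(\mathcal{T})=|\{D=\mathrm{diag}(d_1,\dots,d_n)\text{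 invertible complex}:\mathcal{T}=D^{-(m-1)}\mathcal{T}D,\ d_1=1\}|$, where $D^{-(m-1)}\mathcal{T}D$ has entries $d_{i_1}^{-(m-1)}t_{i_1\cdots i_m}d_{i_2}\cdots d_{i_m}$. *)

theory Defs
  imports Complex_Main "HOL-Number_Theory.Cong"
begin

text \<open>Vertices v_1,...,v_n are represented by 0,...,n-1 (v_1 is vertex 0).
  Tensors of order m and dimension n are functions on index lists of length m
  with entries < n.\<close>

definition idx_tuples :: "nat \<Rightarrow> nat \<Rightarrow> nat list set" where
  "idx_tuples k n = {is. length is = k \<and> set is \<subseteq> {..<n}}"

definition uniform_hypergraph :: "nat \<Rightarrow> nat \<Rightarrow> nat set set \<Rightarrow> bool" where
  "uniform_hypergraph m n E \<longleftrightarrow> (\<forall>e\<in>E. e \<subseteq> {..<n} \<and> card e = m)"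

definition hg_connected :: "nat \<Rightarrow> nat set set \<Rightarrow> bool" where
  "hg_connected n E \<longleftrightarrow>
     (\<forall>i<n. \<forall>j<n. (i, j) \<in> {(a, b). \<exists>e\<in>E. a \<in> e \<and> b \<in> e}\<^sup>*)"

definition hg_degree :: "nat set set \<Rightarrow> nat \<Rightarrow> nat" where
  "hg_degree E i = card {e\<in>E. i \<in> e}"

definition adj_tensor :: "nat \<Rightarrow> nat set set \<Rightarrow> nat list \<Rightarrow> complex" where
  "adj_tensor m E = (\<lambda>is. if length is = m \<and> set is \<in> E
                           then 1 / of_nat (fact (m - 1)) else 0)"

definition deg_tensor :: "nat \<Rightarrow> nat set set \<Rightarrow> nat list \<Rightarrow> complex" where
  "deg_tensor m E = (\<lambda>is. if length is = m \<and> is \<noteq> [] \<and> (\<forall>j\<in>set is. j = hd is)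
                           then of_nat (hg_degree E (hd is)) else 0)"

definition lap_tensor :: "nat \<Rightarrow> nat set set \<Rightarrow> nat list \<Rightarrow> complex" where
  "lap_tensor m E = (\<lambda>is. deg_tensor m E is - adj_tensor m E is)"

definition tensor_apply ::
  "nat \<Rightarrow> nat \<Rightarrow> (nat list \<Rightarrow> complex) \<Rightarrow> (nat \<Rightarrow> complex) \<Rightarrow> nat \<Rightarrow> complex" where
  "tensor_apply m n T x i = (\<Sum>js\<in>idx_tuples (m - 1) n. T (i # js) * prod_list (map x js))"

definition cvec :: "nat \<Rightarrow> (nat \<Rightarrow> complex) set" where
  "cvec n = {x. \<forall>i\<ge>n. x i = 0}"

definition proj_point :: "(nat \<Rightarrow> complex) \<Rightarrow> (nat \<Rightarrow> complex) set" where
  "proj_point x = {(\<lambda>i. c * x i) | c. c \<noteq> 0}"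

definition eigvariety ::
  "nat \<Rightarrow> nat \<Rightarrow> (nat list \<Rightarrow> complex) \<Rightarrow> complex \<Rightarrow> (nat \<Rightarrow> complex) set set" where
  "eigvariety m n T lam = proj_point ` {x \<in> cvec n. x \<noteq> (\<lambda>_. 0) \<and>
       (\<forall>i<n. tensor_apply m n T x i = lam * x i ^ (m - 1))}"

text \<open>Invertible diagonal matrices diag(d_1,...,d_n) with d_1 = 1 (coordinates
  outside {0..<n} normalised to 1) fixing T under D^{-(m-1)} T D.\<close>
definition stab_set :: "nat \<Rightarrow> nat \<Rightarrow> (nat list \<Rightarrow> complex) \<Rightarrow> (nat \<Rightarrow> complex) set" where
  "stab_set m n T = {d. (\<forall>i<n. d i \<noteq> 0) \<and> (\<forall>i\<ge>n. d i = 1) \<and> d 0 = 1 \<and>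
      (\<forall>is\<in>idx_tuples m n.
          T is = inverse (d (hd is) ^ (m - 1)) * T is * prod_list (map d (tl is)))}"

definition stab_index :: "nat \<Rightarrow> nat \<Rightarrow> (nat list \<Rightarrow> complex) \<Rightarrow> nat" where
  "stab_index m n T = card (stab_set m n T)"

text \<open>Incidence matrix w.r.t. an enumeration es of the edges: rows = edges, columns = vertices.\<close>
definition incidence :: "nat set list \<Rightarrow> nat \<Rightarrow> nat \<Rightarrow> int" where
  "incidence es i j = (if j \<in> es ! i then 1 else 0)"

definition matmul :: "nat \<Rightarrow> (nat \<Rightarrow> nat \<Rightarrow> int) \<Rightarrow> (nat \<Rightarrow> nat \<Rightarrow> int) \<Rightarrow> nat \<Rightarrow> nat \<Rightarrow> int" where
  "matmul k A B i j = (\<Sum>l<k. A i l * B l j)"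

definition invertible_mod :: "nat \<Rightarrow> nat \<Rightarrow> (nat \<Rightarrow> nat \<Rightarrow> int) \<Rightarrow> bool" where
  "invertible_mod m k P \<longleftrightarrow> (\<exists>P'. \<forall>i<k. \<forall>j<k.
       [matmul k P P' i j = (if i = j then 1 else 0)] (mod int m) \<and>
       [matmul k P' P i j = (if i = j then 1 else 0)] (mod int m))"

text \<open>The p x q matrix B has Smith normal form over Z_m with nonzero diagonal
  entries d 0, ..., d (r-1) (i.e. d_1, ..., d_r).\<close>
definition smith_normal_form_mod ::
  "nat \<Rightarrow> nat \<Rightarrow> nat \<Rightarrow> (nat \<Rightarrow> nat \<Rightarrow> int) \<Rightarrow> nat \<Rightarrow> (nat \<Rightarrow> int) \<Rightarrow> bool" where
  "smith_normal_form_mod m p q B r d \<longleftrightarrow>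
     r \<le> p \<and> r \<le> q \<and>
     (\<forall>i<r. 1 \<le> d i \<and> d i \<le> int m - 1 \<and> d i dvd int m) \<and>
     (\<forall>i. i + 1 < r \<longrightarrow> d i dvd d (i + 1)) \<and>
     (\<exists>P Q. invertible_mod m p P \<and> invertible_mod m q Q \<and>
        (\<forall>i<p. \<forall>j<q. [matmul q (matmul p P B) Q i j = (if i = j \<and> i < r then d i else 0)] (mod int m)))"

end

theory Submission
  imports Defs "HOL-Library.FuncSet" "HOL-Combinatorics.Multiset_Permutations"
begin


definition mv :: "nat \<Rightarrow> (nat \<Rightarrow> nat \<Rightarrow> int) \<Rightarrow> (nat \<Rightarrow> int) \<Rightarrow> nat \<Rightarrow> int" where
  "mv k A x i = (\<Sum>l<k. A i l * x l)"

lemma mv_assoc: "mv k1 A (mv k2 B x) i = mv k2 (matmul k1 A B) x i"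
  unfolding mv_def matmul_def
  by (simp add: sum_distrib_left sum_distrib_right mult.assoc sum.swap[of _ "{..<k1}"])

lemma mv_cong: "(\<And>l. l < k \<Longrightarrow> [x l = y l] (mod M)) \<Longrightarrow> [mv k A x i = mv k A y i] (mod M)"
  unfolding mv_def by (intro cong_sum cong_mult cong_refl) auto

lemma mv_id:
  assumes "\<And>i j. i < k \<Longrightarrow> j < k \<Longrightarrow> [C i j = (if i = j then 1 else 0)] (mod M)" "i < k"
  shows "[mv k C x i = x i] (mod M)"
proof -
  have "[mv k C x i = (\<Sum>l<k. (if i = l then 1 else 0) * x l)] (mod M)"
    unfolding mv_def using assms by (intro cong_sum cong_mult cong_refl) auto
  also have "(\<Sum>l<k. (if i = l then 1 else 0) * x l) = x i"
    using assms(2) by (simp add: if_distrib[of "\<lambda>c. c * _"] cong: if_cong)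
  finally show ?thesis .
qed

lemma count_mult_zero:
  fixes D M :: int
  assumes "1 \<le> D" "D dvd M" "M > 0"
  shows "card {x\<in>{0..<M}. [D * x = 0] (mod M)} = nat D"
proof -
  obtain c where c: "M = D * c" using assms(2) by blast
  have cpos: "c > 0" using c assms by (simp add: zero_less_mult_iff)
  have "{x\<in>{0..<M}. [D * x = 0] (mod M)} = (\<lambda>t. c * t) ` {0..<D}"
  proof (intro set_eqI iffI)
    fix x assume x: "x \<in> {x\<in>{0..<M}. [D * x = 0] (mod M)}"
    then have "D * c dvd D * x" using c by (simp add: cong_0_iff)
    then have "c dvd x" using assms(1) by simp
    then obtain t where t: "x = c * t" by blast
    have "t \<ge> 0" using x t cpos by (simp add: zero_le_mult_iff)
    moreover have "t < D" using x t c cpos by (simp add: mult.commute)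
    ultimately show "x \<in> (\<lambda>t. c * t) ` {0..<D}" using t by (intro image_eqI[of _ _ t]) auto
  next
    fix x assume "x \<in> (\<lambda>t. c * t) ` {0..<D}"
    then obtain t where t: "x = c * t" "t \<in> {0..<D}" by (elim imageE) 
    then have t: "x = c * t" "0 \<le> t" "t < D" by auto
    have "c * t < c * D" using t cpos by simp
    then show "x \<in> {x\<in>{0..<M}. [D * x = 0] (mod M)}"
      using t cpos c by (auto simp: cong_0_iff mult.commute)
  qed
  moreover have "inj_on (\<lambda>t. c * t) {0..<D}" using cpos by (auto simp: inj_on_def)
  ultimately show ?thesis by (simp add: card_image)
qed

lemma snf_count:
  fixes B :: "nat \<Rightarrow> nat \<Rightarrow> int"
  assumes snf: "smith_normal_form_mod m p n B r d" and m: "m \<ge> 2"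
  shows "int (card {a \<in> PiE {..<n} (\<lambda>_. {0..<int m}). \<forall>k<p. [mv n B a k = 0] (mod int m)})
           = int m ^ (n - r) * (\<Prod>i<r. d i)"
proof -
  let ?M = "int m"
  let ?Box = "PiE {..<n} (\<lambda>_. {0..<int m})"
  have rp: "r \<le> p" and rn: "r \<le> n" and dprop: "\<And>i. i < r \<Longrightarrow> 1 \<le> d i \<and> d i \<le> int m - 1 \<and> d i dvd int m"
    using snf unfolding smith_normal_form_mod_def by auto
  obtain P Q where P: "invertible_mod m p P" and Q: "invertible_mod m n Q"
    and S: "\<And>i j. i < p \<Longrightarrow> j < n \<Longrightarrow>
       [matmul n (matmul p P B) Q i j = (if i = j \<and> i < r then d i else 0)] (mod ?M)"
    using snf unfolding smith_normal_form_mod_def by blast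
  obtain P' where P'1: "\<And>i j. i < p \<Longrightarrow> j < p \<Longrightarrow> [matmul p P' P i j = (if i = j then 1 else 0)] (mod ?M)"
    using P unfolding invertible_mod_def by blast
  obtain Q' where Q'1: "\<And>i j. i < n \<Longrightarrow> j < n \<Longrightarrow> [matmul n Q Q' i j = (if i = j then 1 else 0)] (mod ?M)"
    and Q'2: "\<And>i j. i < n \<Longrightarrow> j < n \<Longrightarrow> [matmul n Q' Q i j = (if i = j then 1 else 0)] (mod ?M)"
    using Q unfolding invertible_mod_def by blast
  define f where "f a = restrict (\<lambda>j. mv n Q' a j mod ?M) {..<n}" for a
  define g where "g b = restrict (\<lambda>j. mv n Q b j mod ?M) {..<n}" for b
  have Mpos: "?M > 0" using m by simp
  have f_box: "f a \<in> ?Box" for a using Mpos unfolding f_def by auto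
  have g_box: "g b \<in> ?Box" for b using Mpos unfolding g_def by auto
  have Qfa: "[mv n Q (f a) j = a j] (mod ?M)" if "j < n" for a j
  proof -
    have "[mv n Q (f a) j = mv n Q (mv n Q' a) j] (mod ?M)"
      by (rule mv_cong) (simp add: f_def cong_def)
    also have "mv n Q (mv n Q' a) j = mv n (matmul n Q Q') a j" by (rule mv_assoc)
    also have "[\<dots> = a j] (mod ?M)" using Q'1 that by (rule mv_id)
    finally show ?thesis .
  qed
  have Q'gb: "[mv n Q' (g b) j = b j] (mod ?M)" if "j < n" for b j
  proof -
    have "[mv n Q' (g b) j = mv n Q' (mv n Q b) j] (mod ?M)"
      by (rule mv_cong) (simp add: g_def cong_def)
    also have "mv n Q' (mv n Q b) j = mv n (matmul n Q' Q) b j" by (rule mv_assoc)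
    also have "[\<dots> = b j] (mod ?M)" using Q'2 that by (rule mv_id)
    finally show ?thesis .
  qed
  have gf: "g (f a) = a" if "a \<in> ?Box" for a
  proof (rule PiE_ext[OF g_box that])
    fix j assume j: "j \<in> {..<n}"
    then have "mv n Q (f a) j mod ?M = a j mod ?M" using Qfa[of j a] by (simp add: cong_def)
    also have "a j mod ?M = a j" using that j by (auto simp: PiE_def Pi_def)
    finally show "g (f a) j = a j" using j by (simp add: g_def)
  qed
  have fg: "f (g b) = b" if "b \<in> ?Box" for b
  proof (rule PiE_ext[OF f_box that])
    fix j assume j: "j \<in> {..<n}"
    then have "mv n Q' (g b) j mod ?M = b j mod ?M" using Q'gb[of j b] by (simp add: cong_def)
    also have "b j mod ?M = b j" using that j by (auto simp: PiE_def Pi_def)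
    finally show "f (g b) j = b j" using j by (simp add: f_def)
  qed
  have SNFb: "[mv n (matmul n (matmul p P B) Q) b i = (if i < r then d i * b i else 0)] (mod ?M)"
    if "i < p" for b i
  proof -
    have "[mv n (matmul n (matmul p P B) Q) b i = (\<Sum>j<n. (if i = j \<and> i < r then d i else 0) * b j)] (mod ?M)"
      unfolding mv_def using that by (intro cong_sum cong_mult cong_refl S) auto
    also have "(\<Sum>j<n. (if i = j \<and> i < r then d i else 0) * b j) = (\<Sum>j<n. if j = i then (if i < r then d i * b i else 0) else 0)"
      by (intro sum.cong) auto
    also have "\<dots> = (if i < r then d i * b i else 0)" using rn by (auto simp: sum.delta)
    finally show ?thesis .
  qed
  have chain: "mv n (matmul n (matmul p P B) Q) b i = mv p P (mv n B (mv n Q b)) i" for b i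
    by (simp add: mv_assoc)
  have chain': "mv p P (mv n B (mv n Q b)) = mv n (matmul n (matmul p P B) Q) b" for b
    by (rule ext) (simp add: chain)
  have cond: "(\<forall>k<p. [mv n B a k = 0] (mod ?M)) \<longleftrightarrow> (\<forall>i<r. [d i * f a i = 0] (mod ?M))" for a
  proof -
    have BQ: "[mv n B (mv n Q (f a)) k = mv n B a k] (mod ?M)" for k
      by (rule mv_cong) (rule Qfa)
    show ?thesis
    proof
      assume H: "\<forall>k<p. [mv n B a k = 0] (mod ?M)"
      show "\<forall>i<r. [d i * f a i = 0] (mod ?M)"
      proof (intro allI impI)
        fix i assume i: "i < r"
        have "[d i * f a i = mv n (matmul n (matmul p P B) Q) (f a) i] (mod ?M)"
          using SNFb[of i "f a"] i rp by (simp add: cong_sym)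
        also have "mv n (matmul n (matmul p P B) Q) (f a) i = mv p P (mv n B (mv n Q (f a))) i"
          by (rule chain)
        also have "[\<dots> = mv p P (\<lambda>_. 0) i] (mod ?M)"
          by (rule mv_cong) (use BQ H cong_trans in blast)
        also have "mv p P (\<lambda>_. 0) i = 0" by (simp add: mv_def)
        finally show "[d i * f a i = 0] (mod ?M)" .
      qed
    next
      assume H: "\<forall>i<r. [d i * f a i = 0] (mod ?M)"
      show "\<forall>k<p. [mv n B a k = 0] (mod ?M)"
      proof (intro allI impI)
        fix k assume k: "k < p"
        have "[mv n B a k = mv n B (mv n Q (f a)) k] (mod ?M)" using BQ by (simp add: cong_sym)
        also have "[mv n B (mv n Q (f a)) k = mv p (matmul p P' P) (mv n B (mv n Q (f a))) k] (mod ?M)"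
          using mv_id[OF P'1 k] by (simp add: cong_sym)
        also have "mv p (matmul p P' P) (mv n B (mv n Q (f a))) k = mv p P' (mv p P (mv n B (mv n Q (f a)))) k"
          by (simp add: mv_assoc)
        also have "\<dots> = mv p P' (mv n (matmul n (matmul p P B) Q) (f a)) k"
          by (simp add: chain')
        also have "[\<dots> = mv p P' (\<lambda>_. 0) k] (mod ?M)"
        proof (rule mv_cong)
          fix l assume l: "l < p"
          show "[mv n (matmul n (matmul p P B) Q) (f a) l = 0] (mod ?M)"
            using SNFb[OF l, of "f a"] H by (cases "l < r") (auto intro: cong_trans)
        qed
        also have "mv p P' (\<lambda>_. 0) k = 0" by (simp add: mv_def)
        finally show "[mv n B a k = 0] (mod ?M)" .
      qed
    qed
  qed
  define T where "T i = {x\<in>{0..<?M}. i < r \<longrightarrow> [d i * x = 0] (mod ?M)}" for i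
  have bij: "bij_betw f {a \<in> ?Box. \<forall>k<p. [mv n B a k = 0] (mod ?M)} (PiE {..<n} T)"
  proof (rule bij_betw_byWitness[where f' = g])
    show "\<forall>a\<in>{a \<in> ?Box. \<forall>k<p. [mv n B a k = 0] (mod ?M)}. g (f a) = a" using gf by blast
    have TB: "PiE {..<n} T \<subseteq> ?Box" unfolding T_def by (auto simp: PiE_def Pi_def)
    show "\<forall>b\<in>PiE {..<n} T. f (g b) = b" using fg TB by blast
    show "f ` {a \<in> ?Box. \<forall>k<p. [mv n B a k = 0] (mod ?M)} \<subseteq> PiE {..<n} T"
    proof (rule image_subsetI)
      fix a assume "a \<in> {a \<in> ?Box. \<forall>k<p. [mv n B a k = 0] (mod ?M)}"
      then have "\<forall>i<r. [d i * f a i = 0] (mod ?M)" using cond by blast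
      then show "f a \<in> PiE {..<n} T" using f_box[of a] unfolding T_def by (auto simp: PiE_def Pi_def)
    qed
    show "g ` PiE {..<n} T \<subseteq> {a \<in> ?Box. \<forall>k<p. [mv n B a k = 0] (mod ?M)}"
    proof (rule image_subsetI)
      fix b assume b: "b \<in> PiE {..<n} T"
      have "g b \<in> ?Box" by (rule g_box)
      have "\<forall>i<r. [d i * f (g b) i = 0] (mod ?M)" using fg[of b] b TB rn unfolding T_def by (auto simp: PiE_def Pi_def)
      then show "g b \<in> {a \<in> ?Box. \<forall>k<p. [mv n B a k = 0] (mod ?M)}" using cond \<open>g b \<in> ?Box\<close> by blast
    qed
  qed
  have "card {a \<in> ?Box. \<forall>k<p. [mv n B a k = 0] (mod ?M)} = card (PiE {..<n} T)"
    by (rule bij_betw_same_card[OF bij])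
  also have "\<dots> = (\<Prod>i<n. card (T i))" by (simp add: card_PiE)
  finally have c1: "int (card {a \<in> ?Box. \<forall>k<p. [mv n B a k = 0] (mod ?M)}) = (\<Prod>i<n. int (card (T i)))"
    by simp
  have Tlt: "int (card (T i)) = d i" if "i < r" for i
  proof -
    have "T i = {x\<in>{0..<?M}. [d i * x = 0] (mod ?M)}" using that by (simp add: T_def)
    then show ?thesis using count_mult_zero[of "d i" ?M] dprop[OF that] Mpos by simp
  qed
  have Tge: "int (card (T i)) = ?M" if "\<not> i < r" for i
  proof -
    have "T i = {0..<?M}" using that by (auto simp: T_def)
    then show ?thesis by simp
  qed
  have "{..<n} = {..<r} \<union> {r..<n}" using rn by auto
  then have "(\<Prod>i<n. int (card (T i))) = (\<Prod>i<r. int (card (T i))) * (\<Prod>i\<in>{r..<n}. int (card (T i)))"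
    by (simp add: prod.union_disjoint[of "{..<r}" "{r..<n}"] ivl_disj_int)
  also have "\<dots> = (\<Prod>i<r. d i) * ?M ^ (n - r)"
    using Tlt Tge by simp
  finally show ?thesis using c1 by simp
qed

lemma shift_count:
  fixes B :: "nat \<Rightarrow> nat \<Rightarrow> int"
  assumes rows: "\<And>k. k < p \<Longrightarrow> (\<Sum>j<n. B k j) = int m" and m: "m \<ge> 1" and n: "n \<ge> 1"
  shows "card {a \<in> PiE {..<n} (\<lambda>_. {0..<int m}). \<forall>k<p. [mv n B a k = 0] (mod int m)}
       = m * card {a \<in> PiE {..<n} (\<lambda>_. {0..<int m}). a 0 = 0 \<and> (\<forall>k<p. [mv n B a k = 0] (mod int m))}"
proof -
  let ?M = "int m"
  let ?Box = "PiE {..<n} (\<lambda>_. {0..<int m})"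
  let ?K = "{a \<in> ?Box. \<forall>k<p. [mv n B a k = 0] (mod ?M)}"
  let ?Kz = "{a \<in> ?Box. a 0 = 0 \<and> (\<forall>k<p. [mv n B a k = 0] (mod ?M))}"
  have Mpos: "?M > 0" using m by simp
  have shift: "mv n B (\<lambda>j. a j + c) k = mv n B a k + c * (\<Sum>j<n. B k j)" for a c k
    by (simp add: mv_def sum.distrib algebra_simps sum_distrib_left)
  have shiftK: "[mv n B (restrict (\<lambda>j. (a j + c) mod ?M) {..<n}) k = 0] (mod ?M)"
    if "\<forall>k<p. [mv n B a k = 0] (mod ?M)" "k < p" for a c k
  proof -
    have "[mv n B (restrict (\<lambda>j. (a j + c) mod ?M) {..<n}) k = mv n B (\<lambda>j. a j + c) k] (mod ?M)"
      by (rule mv_cong) (simp add: cong_def)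
    also have "mv n B (\<lambda>j. a j + c) k = mv n B a k + c * ?M" using shift rows that(2) by simp
    also have "[\<dots> = 0 + 0] (mod ?M)"
      using that by (intro cong_add) (auto simp: cong_def)
    also have "(0::int) + 0 = 0" by simp
    finally show ?thesis .
  qed
  define h where "h = (\<lambda>(a, c). restrict (\<lambda>j. (a j + c) mod ?M) {..<n})"
  define h' where "h' a = (restrict (\<lambda>j. (a j + - a 0) mod ?M) {..<n}, a 0)" for a :: "nat \<Rightarrow> int"
  have zero: "0 \<in> {..<n}" using n by simp
  have "bij_betw h (?Kz \<times> {0..<?M}) ?K"
  proof (rule bij_betw_byWitness[where f' = h'])
    show "\<forall>x\<in>?Kz \<times> {0..<?M}. h' (h x) = x"
    proof
      fix x assume x: "x \<in> ?Kz \<times> {0..<?M}"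
      then obtain a c where ac: "x = (a, c)" "a \<in> ?Kz" "c \<in> {0..<?M}" by blast
      have "h' (h x) = (restrict (\<lambda>j. ((a j + c) mod ?M + - c) mod ?M) {..<n}, c)"
        using ac zero by (auto simp: h_def h'_def restrict_def)
      also have "restrict (\<lambda>j. ((a j + c) mod ?M + - c) mod ?M) {..<n} = a"
      proof (rule PiE_ext)
        show "a \<in> ?Box" using ac by simp
        show "restrict (\<lambda>j. ((a j + c) mod ?M + - c) mod ?M) {..<n} \<in> ?Box" using Mpos by auto
        fix j assume j: "j \<in> {..<n}"
        have "((a j + c) mod ?M + - c) mod ?M = a j mod ?M" by (simp add: mod_add_left_eq mod_diff_left_eq)
        also have "\<dots> = a j" using ac j by (auto simp: PiE_def Pi_def)
        finally show "restrict (\<lambda>j. ((a j + c) mod ?M + - c) mod ?M) {..<n} j = a j" using j by simp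
      qed
      finally show "h' (h x) = x" using ac by simp
    qed
    show "\<forall>a\<in>?K. h (h' a) = a"
    proof
      fix a assume a: "a \<in> ?K"
      show "h (h' a) = a"
      proof (rule PiE_ext)
        show "a \<in> ?Box" using a by simp
        show "h (h' a) \<in> ?Box" using Mpos by (auto simp: h_def h'_def)
        fix j assume j: "j \<in> {..<n}"
        have "((a j + - a 0) mod ?M + a 0) mod ?M = a j mod ?M" by (simp add: mod_add_left_eq mod_diff_left_eq)
        also have "\<dots> = a j" using a j by (auto simp: PiE_def Pi_def)
        finally show "h (h' a) j = a j" using j by (simp add: h_def h'_def)
      qed
    qed
    show "h ` (?Kz \<times> {0..<?M}) \<subseteq> ?K"
    proof (rule image_subsetI)
      fix x assume x: "x \<in> ?Kz \<times> {0..<?M}"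
      then obtain a c where ac: "x = (a, c)" "a \<in> ?Kz" "c \<in> {0..<?M}" by blast
      show "h x \<in> ?K" using ac shiftK[where a=a] Mpos by (auto simp: h_def)
    qed
    show "h' ` ?K \<subseteq> ?Kz \<times> {0..<?M}"
    proof (rule image_subsetI)
      fix a assume a: "a \<in> ?K"
      have a0: "a 0 \<in> {0..<?M}" using a zero by (auto simp: PiE_def Pi_def)
      show "h' a \<in> ?Kz \<times> {0..<?M}" using a a0 shiftK[where a=a and c="- a 0"] Mpos zero by (auto simp: h'_def)
    qed
  qed
  then have "card ?K = card (?Kz \<times> {0..<?M})" by (simp add: bij_betw_same_card)
  also have "\<dots> = card ?Kz * m" by (simp add: card_cartesian_product)
  finally show ?thesis by simp
qed



definition good :: "nat \<Rightarrow> nat \<Rightarrow> nat set set \<Rightarrow> (nat \<Rightarrow> complex) \<Rightarrow> bool" where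
  "good m n E d \<longleftrightarrow> (\<forall>i<n. d i \<noteq> 0) \<and> (\<forall>i\<ge>n. d i = 1) \<and> d 0 = 1 \<and>
     (\<forall>e\<in>E. \<forall>i\<in>e. d i ^ (m - 1) = (\<Prod>j\<in>e - {i}. d j))"

lemma prod_list_const_elems:
  "(\<forall>j\<in>set t. j = h) \<Longrightarrow> prod_list (map d t) = (d h :: complex) ^ length t"
  by (induction t) auto

lemma eq_scale_iff:
  fixes a x y :: complex
  assumes "x \<noteq> 0"
  shows "(a = inverse x * a * y) \<longleftrightarrow> (a = 0 \<or> x = y)"
proof (cases "a = 0")
  case False
  have "(a = inverse x * a * y) \<longleftrightarrow> (a * x = a * y)"
    using assms by (auto simp: field_simps)
  also have "\<dots> \<longleftrightarrow> x = y" using False by simp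
  finally show ?thesis using False by simp
qed simp

lemma tuple_edge:
  assumes unif: "uniform_hypergraph m n E" and m: "m \<ge> 2"
    and is_: "length is = m" "set is \<in> E"
  shows "distinct is \<and> hd is \<in> set is \<and> distinct (tl is) \<and> set (tl is) = set is - {hd is}
         \<and> is = hd is # tl is"
proof -
  have "card (set is) = m" using unif is_ unfolding uniform_hypergraph_def by auto
  then have dist: "distinct is" using is_ by (simp add: card_distinct)
  obtain h t where "is = h # t" using is_ m by (cases "is") auto
  then show ?thesis using dist by auto
qed

lemma stab_adj:
  assumes unif: "uniform_hypergraph m n E" and m: "m \<ge> 2"
  shows "stab_set m n (adj_tensor m E) = {d. good m n E d}"
proof -
  have Anz: "adj_tensor m E is \<noteq> 0 \<longleftrightarrow> length is = m \<and> set is \<in> E" for "is"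
    by (simp add: adj_tensor_def)
  have key: "(\<forall>is\<in>idx_tuples m n. adj_tensor m E is = inverse (d (hd is) ^ (m - 1)) * adj_tensor m E is * prod_list (map d (tl is)))
      \<longleftrightarrow> (\<forall>e\<in>E. \<forall>i\<in>e. d i ^ (m - 1) = (\<Prod>j\<in>e - {i}. d j))"
    if nz: "\<forall>i<n. d i \<noteq> 0" for d
  proof -
    have hdn: "hd is < n" if "is \<in> idx_tuples m n" for "is"
      using that m unfolding idx_tuples_def by (cases "is") auto
    have "(\<forall>is\<in>idx_tuples m n. adj_tensor m E is = inverse (d (hd is) ^ (m - 1)) * adj_tensor m E is * prod_list (map d (tl is)))
       \<longleftrightarrow> (\<forall>is\<in>idx_tuples m n. length is = m \<and> set is \<in> E \<longrightarrow> d (hd is) ^ (m - 1) = prod_list (map d (tl is)))"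
    proof (intro ball_cong refl)
      fix "is" assume "is \<in> idx_tuples m n"
      then have "d (hd is) ^ (m - 1) \<noteq> 0" using hdn nz by simp
      then show "(adj_tensor m E is = inverse (d (hd is) ^ (m - 1)) * adj_tensor m E is * prod_list (map d (tl is)))
          \<longleftrightarrow> (length is = m \<and> set is \<in> E \<longrightarrow> d (hd is) ^ (m - 1) = prod_list (map d (tl is)))"
        using Anz[of "is"] eq_scale_iff by blast
    qed
    also have "\<dots> \<longleftrightarrow> (\<forall>e\<in>E. \<forall>i\<in>e. d i ^ (m - 1) = (\<Prod>j\<in>e - {i}. d j))"
    proof
      assume H: "\<forall>is\<in>idx_tuples m n. length is = m \<and> set is \<in> E \<longrightarrow> d (hd is) ^ (m - 1) = prod_list (map d (tl is))"
      show "\<forall>e\<in>E. \<forall>i\<in>e. d i ^ (m - 1) = (\<Prod>j\<in>e - {i}. d j)"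
      proof (intro ballI)
        fix e i assume e: "e \<in> E" and i: "i \<in> e"
        have ce: "card e = m" and en: "e \<subseteq> {..<n}" using unif e unfolding uniform_hypergraph_def by auto
        have fe: "finite e" using ce m by (intro card_ge_0_finite) simp
        define t where "t = sorted_list_of_set (e - {i})"
        have st: "set t = e - {i}" and dt: "distinct t" using fe by (auto simp: t_def)
        have lt: "length t = m - 1" using st dt ce fe i
          by (metis card_Diff_singleton distinct_card)
        have "i # t \<in> idx_tuples m n" using lt st en i m unfolding idx_tuples_def by auto
        moreover have "set (i # t) = e" using st i by auto
        ultimately have "d i ^ (m - 1) = prod_list (map d t)" using H lt e m by fastforce
        also have "\<dots> = (\<Prod>j\<in>e - {i}. d j)" using dt st by (metis prod.distinct_set_conv_list)
        finally show "d i ^ (m - 1) = (\<Prod>j\<in>e - {i}. d j)" .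
      qed
    next
      assume H: "\<forall>e\<in>E. \<forall>i\<in>e. d i ^ (m - 1) = (\<Prod>j\<in>e - {i}. d j)"
      show "\<forall>is\<in>idx_tuples m n. length is = m \<and> set is \<in> E \<longrightarrow> d (hd is) ^ (m - 1) = prod_list (map d (tl is))"
      proof (intro ballI impI)
        fix "is" assume "is \<in> idx_tuples m n" and L: "length is = m \<and> set is \<in> E"
        then have T: "distinct is \<and> hd is \<in> set is \<and> distinct (tl is) \<and> set (tl is) = set is - {hd is}"
          using tuple_edge[OF unif m] by blast
        have "d (hd is) ^ (m - 1) = (\<Prod>j\<in>set is - {hd is}. d j)" using H L T by blast
        also have "\<dots> = prod_list (map d (tl is))" using T by (metis prod.distinct_set_conv_list)
        finally show "d (hd is) ^ (m - 1) = prod_list (map d (tl is))" .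
      qed
    qed
    finally show ?thesis .
  qed
  show ?thesis
    unfolding stab_set_def good_def using key by blast
qed

lemma stab_lap:
  assumes unif: "uniform_hypergraph m n E" and m: "m \<ge> 2"
  shows "stab_set m n (lap_tensor m E) = stab_set m n (adj_tensor m E)"
proof -
  have per: "(lap_tensor m E is = inverse (d (hd is) ^ (m - 1)) * lap_tensor m E is * prod_list (map d (tl is)))
      \<longleftrightarrow> (adj_tensor m E is = inverse (d (hd is) ^ (m - 1)) * adj_tensor m E is * prod_list (map d (tl is)))"
    if nz: "\<forall>i<n. d i \<noteq> 0" and "is": "is \<in> idx_tuples m n" for d "is"
  proof -
    obtain h t where ht: "is = h # t" and lt: "length t = m - 1" and hn: "h < n"
      using "is" m unfolding idx_tuples_def by (cases "is") auto
    show ?thesis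
    proof (cases "\<forall>j\<in>set is. j = hd is")
      case True
      then have tj: "\<forall>j\<in>set t. j = h" using ht by simp
      have "prod_list (map d (tl is)) = d h ^ (m - 1)"
        using prod_list_const_elems[OF tj, of d] ht lt by simp
      moreover have "d h ^ (m - 1) \<noteq> 0" using nz hn by simp
      ultimately have f1: "inverse (d (hd is) ^ (m - 1)) * prod_list (map d (tl is)) = 1"
        using ht by simp
      have "\<And>a::complex. a = inverse (d (hd is) ^ (m - 1)) * a * prod_list (map d (tl is))"
        using f1 by (metis mult.commute mult.left_commute mult_1_right)
      then show ?thesis by blast
    next
      case False
      then have "deg_tensor m E is = 0" by (auto simp: deg_tensor_def)
      then have "lap_tensor m E is = - adj_tensor m E is" by (simp add: lap_tensor_def)
      then show ?thesis by (auto simp: algebra_simps)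
    qed
  qed
  show ?thesis unfolding stab_set_def
  proof (intro Collect_cong)
    fix d
    show "((\<forall>i<n. d i \<noteq> 0) \<and> (\<forall>i\<ge>n. d i = 1) \<and> d 0 = 1 \<and>
         (\<forall>is\<in>idx_tuples m n. lap_tensor m E is = inverse (d (hd is) ^ (m - 1)) * lap_tensor m E is * prod_list (map d (tl is)))) =
        ((\<forall>i<n. d i \<noteq> 0) \<and> (\<forall>i\<ge>n. d i = 1) \<and> d 0 = 1 \<and>
         (\<forall>is\<in>idx_tuples m n. adj_tensor m E is = inverse (d (hd is) ^ (m - 1)) * adj_tensor m E is * prod_list (map d (tl is))))"
      using per[of d] by blast
  qed
qed



definition omega :: "nat \<Rightarrow> complex" where "omega m = cis (2 * pi / real m)"

lemma omega_pow: "omega m ^ k = cis (2 * pi * real k / real m)"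
  by (simp add: omega_def DeMoivre mult.commute)

lemma omega_m: "m > 0 \<Longrightarrow> omega m ^ m = 1"
  by (simp add: omega_pow)

lemma omega_mod: "m > 0 \<Longrightarrow> omega m ^ k = omega m ^ (k mod m)"
proof -
  assume m: "m > 0"
  have "omega m ^ k = omega m ^ (m * (k div m) + k mod m)" by simp
  also have "\<dots> = (omega m ^ m) ^ (k div m) * omega m ^ (k mod m)" by (simp only: power_add power_mult)
  finally show ?thesis using omega_m[OF m] by simp
qed

lemma omega_inj: "m > 0 \<Longrightarrow> a < m \<Longrightarrow> b < m \<Longrightarrow> omega m ^ a = omega m ^ b \<Longrightarrow> a = b"
  using bij_betw_roots_unity[of m] unfolding bij_betw_def inj_on_def omega_pow by auto

lemma omega_surj: "m > 0 \<Longrightarrow> z ^ m = 1 \<Longrightarrow> \<exists>k<m. z = omega m ^ k"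
  using bij_betw_roots_unity[of m] unfolding bij_betw_def omega_pow by auto

lemma omega_one_iff: "m > 0 \<Longrightarrow> omega m ^ k = 1 \<longleftrightarrow> m dvd k"
proof -
  assume m: "m > 0"
  have "omega m ^ k = 1 \<longleftrightarrow> omega m ^ (k mod m) = omega m ^ 0" using omega_mod[OF m] by simp
  also have "\<dots> \<longleftrightarrow> k mod m = 0" using omega_inj[OF m, of "k mod m" 0] m by auto
  finally show ?thesis by auto
qed

lemma omega_prod_iff:
  fixes a :: "nat \<Rightarrow> int"
  assumes m: "m > 0" and nonneg: "\<And>j. j \<in> e \<Longrightarrow> a j \<ge> 0"
  shows "(\<Prod>j\<in>e. omega m ^ nat (a j)) = 1 \<longleftrightarrow> [(\<Sum>j\<in>e. a j) = 0] (mod int m)"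
proof -
  have "(\<Prod>j\<in>e. omega m ^ nat (a j)) = omega m ^ (\<Sum>j\<in>e. nat (a j))" by (simp add: power_sum)
  moreover have "int (\<Sum>j\<in>e. nat (a j)) = (\<Sum>j\<in>e. a j)" using nonneg by simp
  ultimately show ?thesis using omega_one_iff[OF m]
    by (metis cong_0_iff int_dvd_int_iff)
qed

lemma mv_incidence:
  assumes "es ! k \<subseteq> {..<n}"
  shows "mv n (incidence es) a k = (\<Sum>j\<in>es ! k. a j)"
proof -
  have "mv n (incidence es) a k = (\<Sum>j<n. if j \<in> es ! k then a j else 0)"
    unfolding mv_def incidence_def by (intro sum.cong) auto
  also have "\<dots> = (\<Sum>j\<in>{j\<in>{..<n}. j \<in> es ! k}. a j)" by (rule sum.inter_filter[symmetric]) simp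
  also have "{j\<in>{..<n}. j \<in> es ! k} = es ! k" using assms by auto
  finally show ?thesis .
qed

lemma good_iff:
  assumes unif: "uniform_hypergraph m n E" and conn: "hg_connected n E" and m: "m \<ge> 2"
  shows "good m n E d \<longleftrightarrow> (\<forall>i<n. d i ^ m = 1) \<and> (\<forall>i\<ge>n. d i = 1) \<and> d 0 = 1 \<and> (\<forall>e\<in>E. (\<Prod>j\<in>e. d j) = 1)"
proof -
  have fe: "finite e" and ce: "card e = m" and en: "e \<subseteq> {..<n}" if "e \<in> E" for e
    using unif that m unfolding uniform_hypergraph_def by (auto intro: card_ge_0_finite)
  have split: "(\<Prod>j\<in>e. d j) = d i * (\<Prod>j\<in>e - {i}. d j)" if "e \<in> E" "i \<in> e" for e i
    using fe[OF that(1)] that(2) by (simp add: prod.remove)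
  have pm: "d i ^ m = d i * d i ^ (m - 1)" for i using m by (cases m) auto
  show ?thesis
  proof
    assume g: "good m n E d"
    have edge: "d i ^ m = (\<Prod>j\<in>e. d j)" if "e \<in> E" "i \<in> e" for e i
      using g that split[OF that] pm unfolding good_def by simp
    have step: "d b ^ m = d a ^ m" if "(a, b) \<in> {(a, b). \<exists>e\<in>E. a \<in> e \<and> b \<in> e}" for a b
      using that edge by auto
    have all: "d i ^ m = 1" if "i < n" for i
    proof -
      have "(0, i) \<in> {(a, b). \<exists>e\<in>E. a \<in> e \<and> b \<in> e}\<^sup>*" using conn that unfolding hg_connected_def by auto
      then have "d i ^ m = d 0 ^ m"
        by (induction rule: rtrancl_induct) (use step in auto)
      then show ?thesis using g unfolding good_def by simp
    qed
    have "(\<Prod>j\<in>e. d j) = 1" if "e \<in> E" for e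
    proof -
      have "e \<noteq> {}" using ce[OF that] m by auto
      then obtain i where i: "i \<in> e" by blast
      then have "i < n" using en[OF that] by auto
      then show ?thesis using edge[OF that i] all by metis
    qed
    then show "(\<forall>i<n. d i ^ m = 1) \<and> (\<forall>i\<ge>n. d i = 1) \<and> d 0 = 1 \<and> (\<forall>e\<in>E. (\<Prod>j\<in>e. d j) = 1)"
      using all g unfolding good_def by auto
  next
    assume H: "(\<forall>i<n. d i ^ m = 1) \<and> (\<forall>i\<ge>n. d i = 1) \<and> d 0 = 1 \<and> (\<forall>e\<in>E. (\<Prod>j\<in>e. d j) = 1)"
    have nz: "d i \<noteq> 0" if "i < n" for i using H that m by (metis one_neq_zero power_0_left not_numeral_le_zero le_zero_eq)
    have "d i ^ (m - 1) = (\<Prod>j\<in>e - {i}. d j)" if "e \<in> E" "i \<in> e" for e i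
    proof -
      have i: "i < n" using en[OF that(1)] that(2) by auto
      have "d i * d i ^ (m - 1) = 1" using H i pm by metis
      moreover have "d i * (\<Prod>j\<in>e - {i}. d j) = 1" using H split[OF that] that by metis
      ultimately show ?thesis using nz[OF i] by (metis mult_left_cancel)
    qed
    then show "good m n E d" using H nz unfolding good_def by auto
  qed
qed

lemma roots_count:
  assumes unif: "uniform_hypergraph m n E" and m: "m \<ge> 2" and n: "n \<ge> 1" and es: "set es = E"
  shows "card {d :: nat \<Rightarrow> complex. (\<forall>i<n. d i ^ m = 1) \<and> (\<forall>i\<ge>n. d i = 1) \<and> d 0 = 1 \<and> (\<forall>e\<in>E. (\<Prod>j\<in>e. d j) = 1)}
    = card {a \<in> PiE {..<n} (\<lambda>_. {0..<int m}). a 0 = 0 \<and> (\<forall>k<length es. [mv n (incidence es) a k = 0] (mod int m))}"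
    (is "card ?R = card ?K")
proof -
  let ?Box = "PiE {..<n} (\<lambda>_. {0..<int m})"
  have m0: "m > 0" using m by simp
  have en: "e \<subseteq> {..<n}" if "e \<in> E" for e
    using unif that unfolding uniform_hypergraph_def by auto
  define F where "F a = (\<lambda>i. if i < n then omega m ^ nat (a i) else 1)" for a :: "nat \<Rightarrow> int"
  have edges: "(\<forall>e\<in>E. (\<Prod>j\<in>e. F a j) = 1) \<longleftrightarrow> (\<forall>k<length es. [mv n (incidence es) a k = 0] (mod int m))"
    if a: "a \<in> ?Box" for a
  proof -
    have "(\<forall>e\<in>E. (\<Prod>j\<in>e. F a j) = 1) \<longleftrightarrow> (\<forall>e\<in>E. [(\<Sum>j\<in>e. a j) = 0] (mod int m))"
    proof (intro ball_cong refl)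
      fix e assume e: "e \<in> E"
      have "(\<Prod>j\<in>e. F a j) = (\<Prod>j\<in>e. omega m ^ nat (a j))"
        using en[OF e] by (intro prod.cong) (auto simp: F_def)
      moreover have "a j \<ge> 0" if "j \<in> e" for j using a en[OF e] that by (auto simp: PiE_def Pi_def)
      ultimately show "(\<Prod>j\<in>e. F a j) = 1 \<longleftrightarrow> [(\<Sum>j\<in>e. a j) = 0] (mod int m)"
        using omega_prod_iff[OF m0] by simp
    qed
    also have "\<dots> \<longleftrightarrow> (\<forall>k<length es. [(\<Sum>j\<in>es ! k. a j) = 0] (mod int m))"
      using es all_set_conv_all_nth[of es "\<lambda>e. [(\<Sum>j\<in>e. a j) = 0] (mod int m)"] by simp
    also have "\<dots> \<longleftrightarrow> (\<forall>k<length es. [mv n (incidence es) a k = 0] (mod int m))"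
      using mv_incidence en es by (metis nth_mem)
    finally show ?thesis .
  qed
  have "bij_betw F ?K ?R"
  proof (rule bij_betw_imageI)
    show "inj_on F ?K"
    proof (rule inj_onI)
      fix a b assume a: "a \<in> ?K" and b: "b \<in> ?K" and eq: "F a = F b"
      show "a = b"
      proof (rule PiE_ext)
        show "a \<in> ?Box" "b \<in> ?Box" using a b by auto
        fix i assume i: "i \<in> {..<n}"
        have ai: "0 \<le> a i" "a i < int m" and bi: "0 \<le> b i" "b i < int m"
          using a b i by (auto simp: PiE_def Pi_def)
        have "omega m ^ nat (a i) = omega m ^ nat (b i)" using fun_cong[OF eq, of i] i by (simp add: F_def)
        then have "nat (a i) = nat (b i)" using omega_inj[OF m0] ai bi by (meson nat_less_iff)
        then show "a i = b i" using ai bi by simp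
      qed
    qed
    show "F ` ?K = ?R"
    proof (intro set_eqI iffI)
      fix d assume "d \<in> F ` ?K"
      then obtain a where a: "a \<in> ?K" and d: "d = F a" by blast
      have "(\<forall>i<n. d i ^ m = 1)"
        using d omega_m[OF m0] by (simp add: F_def flip: power_mult) (simp add: power_mult mult.commute)
      moreover have "(\<forall>i\<ge>n. d i = 1)" "d 0 = 1" using d a n by (auto simp: F_def)
      moreover have "\<forall>e\<in>E. (\<Prod>j\<in>e. d j) = 1" using edges[of a] a d by auto
      ultimately show "d \<in> ?R" by blast
    next
      fix d assume d: "d \<in> ?R"
      have "\<forall>i. \<exists>k. i < n \<longrightarrow> k < m \<and> d i = omega m ^ k" using d omega_surj[OF m0] by blast
      then obtain kf where kf: "\<And>i. i < n \<Longrightarrow> kf i < m \<and> d i = omega m ^ kf i" by metis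
      define a where "a = restrict (\<lambda>i. int (kf i)) {..<n}"
      have aB: "a \<in> ?Box" using kf by (auto simp: a_def)
      have Fa: "F a = d"
      proof
        fix i show "F a i = d i" using kf d by (auto simp: F_def a_def)
      qed
      have "omega m ^ kf 0 = omega m ^ 0" using kf[of 0] n d by simp
      then have "kf 0 = 0" using omega_inj[OF m0, of "kf 0" 0] kf[of 0] n m0 by simp
      then have a0: "a 0 = 0" using n by (simp add: a_def)
      have "\<forall>k<length es. [mv n (incidence es) a k = 0] (mod int m)"
        using edges[OF aB] Fa d by auto
      then have "a \<in> ?K" using aB a0 by blast
      then show "d \<in> F ` ?K" using Fa by blast
    qed
  qed
  then show ?thesis by (simp add: bij_betw_same_card)
qed



lemma finite_E:
  assumes "uniform_hypergraph m n E" shows "finite E"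
proof -
  have "E \<subseteq> Pow {..<n}" using assms unfolding uniform_hypergraph_def by auto
  then show ?thesis by (rule finite_subset) simp
qed

lemma finite_idx: "finite (idx_tuples k n)"
proof -
  have "idx_tuples k n = {xs. set xs \<subseteq> {..<n} \<and> length xs = k}" unfolding idx_tuples_def by auto
  then show ?thesis using finite_lists_length_eq[of "{..<n}" k] by simp
qed

lemma tensor_formula:
  assumes unif: "uniform_hypergraph m n E" and m: "m \<ge> 2" and i: "i < n"
  shows "tensor_apply m n (lap_tensor m E) x i
       = of_nat (hg_degree E i) * x i ^ (m - 1) - (\<Sum>e\<in>{e\<in>E. i \<in> e}. \<Prod>j\<in>e - {i}. x j)"
proof -
  let ?T = "idx_tuples (m - 1) n"
  let ?g = "\<lambda>js. prod_list (map x js)"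
  let ?c = "1 / of_nat (fact (m - 1)) :: complex"
  have fT: "finite ?T" by (rule finite_idx)
  have lenT: "length js = m - 1" if "js \<in> ?T" for js using that unfolding idx_tuples_def by auto
  have Sm: "Suc (m - 1) = m" using m by simp
  have split: "tensor_apply m n (lap_tensor m E) x i
      = (\<Sum>js\<in>?T. deg_tensor m E (i # js) * ?g js) - (\<Sum>js\<in>?T. adj_tensor m E (i # js) * ?g js)"
    unfolding tensor_apply_def lap_tensor_def by (simp add: left_diff_distrib sum_subtractf)
  define rep where "rep = replicate (m - 1) i"
  have repT: "rep \<in> ?T" using i unfolding rep_def idx_tuples_def by auto
  have "(\<Sum>js\<in>?T. deg_tensor m E (i # js) * ?g js) = (\<Sum>js\<in>?T. if js = rep then of_nat (hg_degree E i) * x i ^ (m - 1) else 0)"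
  proof (intro sum.cong refl)
    fix js assume js: "js \<in> ?T"
    have "(\<forall>j\<in>set js. j = i) \<longleftrightarrow> js = rep"
      using lenT[OF js] unfolding rep_def by (auto intro: replicate_eqI)
    then show "deg_tensor m E (i # js) * ?g js = (if js = rep then of_nat (hg_degree E i) * x i ^ (m - 1) else 0)"
      using lenT[OF js] Sm by (auto simp: deg_tensor_def rep_def)
  qed
  also have "\<dots> = of_nat (hg_degree E i) * x i ^ (m - 1)" using repT fT by (simp add: sum.delta')
  finally have Dpart: "(\<Sum>js\<in>?T. deg_tensor m E (i # js) * ?g js) = of_nat (hg_degree E i) * x i ^ (m - 1)" .
  define Ei where "Ei = {e\<in>E. i \<in> e}"
  have fEi: "finite Ei" using finite_E[OF unif] unfolding Ei_def by simp
  have ce: "card e = m" and en: "e \<subseteq> {..<n}" and fe: "finite e" if "e \<in> E" for e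
    using unif that m unfolding uniform_hypergraph_def by (auto intro: card_ge_0_finite)
  have U: "{js\<in>?T. set (i # js) \<in> E} = (\<Union>e\<in>Ei. permutations_of_set (e - {i}))"
  proof (intro set_eqI iffI)
    fix js assume js: "js \<in> {js\<in>?T. set (i # js) \<in> E}"
    then have L: "length (i # js) = m" "set (i # js) \<in> E" using lenT Sm by auto
    have "distinct (i # js)" using tuple_edge[OF unif m L] by simp
    then show "js \<in> (\<Union>e\<in>Ei. permutations_of_set (e - {i}))"
      using L unfolding Ei_def permutations_of_set_def by (intro UN_I[of "set (i # js)"]) auto
  next
    fix js assume "js \<in> (\<Union>e\<in>Ei. permutations_of_set (e - {i}))"
    then obtain e where e: "e \<in> E" "i \<in> e" and js: "set js = e - {i}" "distinct js"
      unfolding Ei_def permutations_of_set_def by auto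
    have "length js = card (e - {i})" using js by (metis distinct_card)
    also have "\<dots> = m - 1" using ce[OF e(1)] fe[OF e(1)] e(2) by simp
    finally have "length js = m - 1" .
    moreover have "set js \<subseteq> {..<n}" using js en[OF e(1)] by auto
    moreover have "set (i # js) = e" using js e by auto
    ultimately show "js \<in> {js\<in>?T. set (i # js) \<in> E}" using e unfolding idx_tuples_def by auto
  qed
  have "(\<Sum>js\<in>?T. adj_tensor m E (i # js) * ?g js) = (\<Sum>js\<in>?T. if set (i # js) \<in> E then ?c * ?g js else 0)"
    by (intro sum.cong refl) (use lenT Sm in \<open>auto simp: adj_tensor_def\<close>)
  also have "\<dots> = (\<Sum>js\<in>{js\<in>?T. set (i # js) \<in> E}. ?c * ?g js)"
    by (rule sum.inter_filter[symmetric, OF fT])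
  also have "\<dots> = (\<Sum>e\<in>Ei. \<Sum>js\<in>permutations_of_set (e - {i}). ?c * ?g js)"
    unfolding U
  proof (rule sum.UNION_disjoint[OF fEi])
    show "\<forall>e\<in>Ei. finite (permutations_of_set (e - {i}))" by simp
    show "\<forall>e\<in>Ei. \<forall>e'\<in>Ei. e \<noteq> e' \<longrightarrow> permutations_of_set (e - {i}) \<inter> permutations_of_set (e' - {i}) = {}"
      unfolding Ei_def permutations_of_set_def by blast
  qed
  also have "\<dots> = (\<Sum>e\<in>Ei. \<Prod>j\<in>e - {i}. x j)"
  proof (intro sum.cong refl)
    fix e assume e: "e \<in> Ei"
    have "(\<Sum>js\<in>permutations_of_set (e - {i}). ?c * ?g js) = (\<Sum>js\<in>permutations_of_set (e - {i}). ?c * (\<Prod>j\<in>e - {i}. x j))"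
    proof (intro sum.cong refl)
      fix js assume "js \<in> permutations_of_set (e - {i})"
      then have "set js = e - {i}" "distinct js" unfolding permutations_of_set_def by auto
      then show "?c * ?g js = ?c * (\<Prod>j\<in>e - {i}. x j)" by (metis prod.distinct_set_conv_list)
    qed
    also have "\<dots> = of_nat (fact (card (e - {i}))) * (?c * (\<Prod>j\<in>e - {i}. x j))"
      using fe e unfolding Ei_def by simp
    also have "card (e - {i}) = m - 1" using ce fe e unfolding Ei_def by simp
    finally show "(\<Sum>js\<in>permutations_of_set (e - {i}). ?c * ?g js) = (\<Prod>j\<in>e - {i}. x j)" by simp
  qed
  finally show ?thesis using split Dpart unfolding Ei_def by simp
qed



lemma prod_eq_max:
  fixes f :: "nat \<Rightarrow> real"
  assumes "finite S" "\<And>k. k \<in> S \<Longrightarrow> 0 \<le> f k \<and> f k \<le> M" "M > 0" "prod f S = M ^ card S" "k \<in> S"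
  shows "f k = M"
proof (rule ccontr)
  assume ne: "f k \<noteq> M"
  then have lt: "f k < M" using assms(2)[OF assms(5)] by simp
  have "prod f S = f k * prod f (S - {k})" using assms(1,5) by (simp add: prod.remove)
  also have "prod f (S - {k}) \<le> (\<Prod>j\<in>S - {k}. M)"
    using assms(2) by (intro prod_mono) auto
  then have "f k * prod f (S - {k}) \<le> f k * M ^ (card S - 1)"
    using assms(1,5) assms(2)[OF assms(5)] by (simp add: mult_left_mono)
  also have "\<dots> < M * M ^ (card S - 1)" using lt assms(3) by simp
  also have "\<dots> = M ^ card S"
  proof -
    have "card S > 0" using assms(1,5) card_gt_0_iff by blast
    then show ?thesis by (cases "card S") auto
  qed
  finally show False using assms(4) by simp
qed

lemma triangle_eq:
  fixes z :: "nat set \<Rightarrow> complex"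
  assumes "finite K" "(\<Sum>k\<in>K. z k) = of_nat (card K) * w" "\<And>k. k \<in> K \<Longrightarrow> norm (z k) = norm w" "w \<noteq> 0"
    "k \<in> K"
  shows "z k = w"
proof -
  define u where "u k = z k / w" for k
  have nu: "norm (u k) = 1" if "k \<in> K" for k
    using assms(3)[OF that] assms(4) unfolding u_def by (simp add: norm_divide)
  have "(\<Sum>k\<in>K. u k) = (\<Sum>k\<in>K. z k) / w" unfolding u_def by (rule sum_divide_distrib[symmetric])
  also have "\<dots> = of_nat (card K)" using assms(2,4) by simp
  finally have su: "(\<Sum>k\<in>K. u k) = of_nat (card K)" .
  have "(\<Sum>k\<in>K. Re (u k)) = Re (\<Sum>k\<in>K. u k)" by (rule Re_sum[symmetric])
  also have "\<dots> = real (card K)" using su by simp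
  finally have sre: "(\<Sum>k\<in>K. Re (u k)) = real (card K)" .
  have "(\<Sum>k\<in>K. 1 - Re (u k)) = (\<Sum>k\<in>K. (1::real)) - (\<Sum>k\<in>K. Re (u k))" by (rule sum_subtractf)
  also have "\<dots> = 0" using sre by simp
  finally have s0: "(\<Sum>k\<in>K. 1 - Re (u k)) = 0" .
  have nn: "0 \<le> 1 - Re (u k)" if "k \<in> K" for k
  proof -
    have "\<bar>Re (u k)\<bar> \<le> cmod (u k)" by (rule abs_Re_le_cmod)
    moreover have "cmod (u k) = 1" using nu[OF that] .
    ultimately show "0 \<le> 1 - Re (u k)" by (simp add: abs_le_iff)
  qed
  have all0: "\<forall>k\<in>K. 1 - Re (u k) = 0" using sum_nonneg_eq_0_iff[OF assms(1) nn] s0 by simp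
  have "1 - Re (u k) = 0" using all0 assms(5) by simp
  then have re: "Re (u k) = 1" by simp
  have "(cmod (u k))\<^sup>2 = (Re (u k))\<^sup>2 + (Im (u k))\<^sup>2" by (rule cmod_power2)
  then have "(Im (u k))\<^sup>2 = 0" using re nu[OF assms(5)] by simp
  then have "Im (u k) = 0" by simp
  then have "u k = 1" using re by (simp add: complex_eq_iff)
  then show ?thesis using assms(4) unfolding u_def by (simp add: divide_eq_1_iff)
qed

lemma eig_char:
  assumes unif: "uniform_hypergraph m n E" and conn: "hg_connected n E" and m: "m \<ge> 2"
    and x: "x \<in> cvec n" "x \<noteq> (\<lambda>_. 0)"
    and eq: "\<forall>i<n. tensor_apply m n (lap_tensor m E) x i = 0"
  shows "(\<forall>i<n. x i \<noteq> 0) \<and> (\<forall>e\<in>E. \<forall>i\<in>e. x i ^ (m - 1) = (\<Prod>j\<in>e - {i}. x j))"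
proof -
  have ce: "card e = m" and en: "e \<subseteq> {..<n}" and fe: "finite e" if "e \<in> E" for e
    using unif that m unfolding uniform_hypergraph_def by (auto intro: card_ge_0_finite)
  have fE: "finite E" by (rule finite_E[OF unif])
  define Ei where "Ei i = {e\<in>E. i \<in> e}" for i
  have fEi: "finite (Ei i)" for i using fE unfolding Ei_def by simp
  have degeq: "of_nat (card (Ei i)) * x i ^ (m - 1) = (\<Sum>e\<in>Ei i. \<Prod>j\<in>e - {i}. x j)" if "i < n" for i
    using eq tensor_formula[OF unif m that, of x] that unfolding Ei_def hg_degree_def by simp
  obtain i1 where i1: "x i1 \<noteq> 0" using x(2) by auto
  have i1n: "i1 < n"
  proof (rule ccontr)
    assume "\<not> i1 < n"
    then have "x i1 = 0" using x(1) unfolding cvec_def by simp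
    then show False using i1 by simp
  qed
  define M where "M = Max ((\<lambda>j. norm (x j)) ` {..<n})"
  have le: "norm (x j) \<le> M" if "j < n" for j unfolding M_def using that by (intro Max_ge) auto
  obtain i0 where i0: "i0 < n" "norm (x i0) = M"
    using Max_in[of "(\<lambda>j. norm (x j)) ` {..<n}"] i1n unfolding M_def by fastforce
  have Mpos: "M > 0" using le[OF i1n] i1 
  proof -
    have "0 < norm (x i1)" using i1 by simp
    then show ?thesis using le[OF i1n] by linarith
  qed
  have card_e: "card (e - {i}) = m - 1" if "e \<in> E" "i \<in> e" for e i using ce fe that by simp
  have close: "norm (x j) = M" if "i < n" "norm (x i) = M" "e \<in> E" "i \<in> e" "j \<in> e" for i j e
  proof -
    have nP: "norm (\<Prod>j\<in>f - {i}. x j) \<le> M ^ (m - 1)" if "f \<in> Ei i" for f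
    proof -
      have f: "f \<in> E" "i \<in> f" using that unfolding Ei_def by auto
      have "norm (\<Prod>j\<in>f - {i}. x j) = (\<Prod>j\<in>f - {i}. norm (x j))" by (simp add: prod_norm)
      also have "\<dots> \<le> (\<Prod>j\<in>f - {i}. M)" using le en[OF f(1)] by (intro prod_mono) auto
      also have "\<dots> = M ^ (m - 1)" using card_e[OF f] by simp
      finally show ?thesis .
    qed
    have "of_nat (card (Ei i)) * M ^ (m - 1) = norm (of_nat (card (Ei i)) * x i ^ (m - 1))"
      using that(2) by (simp add: norm_mult norm_power)
    also have "\<dots> = norm (\<Sum>f\<in>Ei i. \<Prod>j\<in>f - {i}. x j)" using degeq[OF that(1)] by simp
    also have "\<dots> \<le> (\<Sum>f\<in>Ei i. norm (\<Prod>j\<in>f - {i}. x j))" by (rule norm_sum)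
    finally have "(\<Sum>f\<in>Ei i. M ^ (m - 1) - norm (\<Prod>j\<in>f - {i}. x j)) \<le> 0"
      by (simp add: sum_subtractf)
    moreover have "\<forall>f\<in>Ei i. 0 \<le> M ^ (m - 1) - norm (\<Prod>j\<in>f - {i}. x j)" using nP by simp
    ultimately have "\<forall>f\<in>Ei i. M ^ (m - 1) - norm (\<Prod>j\<in>f - {i}. x j) = 0"
      using sum_nonneg_eq_0_iff[OF fEi] by (meson antisym sum_nonneg)
    moreover have eEi: "e \<in> Ei i" using that unfolding Ei_def by auto
    ultimately have "norm (\<Prod>j\<in>e - {i}. x j) = M ^ (m - 1)" by simp
    then have pe: "(\<Prod>j\<in>e - {i}. norm (x j)) = M ^ card (e - {i})" using card_e[OF that(3,4)] by (simp add: prod_norm)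
    show ?thesis
    proof (cases "j = i")
      case True then show ?thesis using that by simp
    next
      case False
      show ?thesis
        by (rule prod_eq_max[OF _ _ Mpos pe]) (use fe[OF that(3)] le en[OF that(3)] that False in auto)
    qed
  qed
  have allM: "norm (x j) = M" if "j < n" for j
  proof -
    have "(i0, j) \<in> {(a, b). \<exists>e\<in>E. a \<in> e \<and> b \<in> e}\<^sup>*" using conn that i0 unfolding hg_connected_def by auto
    then show ?thesis
    proof (induction rule: rtrancl_induct)
      case base then show ?case using i0 by simp
    next
      case (step a b)
      then obtain e where e: "e \<in> E" "a \<in> e" "b \<in> e" by auto
      then have "a < n" using en by auto
      then show ?case using close[OF _ step.IH e] by simp
    qed
  qed
  have nz: "\<forall>i<n. x i \<noteq> 0" using allM Mpos by (metis norm_zero less_irrefl)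
  have "x i ^ (m - 1) = (\<Prod>j\<in>e - {i}. x j)" if e: "e \<in> E" "i \<in> e" for e i
  proof -
    have i: "i < n" using en e by auto
    have "(\<Prod>j\<in>f - {i}. x j) = x i ^ (m - 1)" if f: "f \<in> Ei i" for f
    proof (rule triangle_eq[where K="Ei i" and z="\<lambda>f. \<Prod>j\<in>f - {i}. x j" and w="x i ^ (m - 1)"])
      show "finite (Ei i)" by (rule fEi)
      show "(\<Sum>f\<in>Ei i. \<Prod>j\<in>f - {i}. x j) = of_nat (card (Ei i)) * x i ^ (m - 1)"
        using degeq[OF i] by simp
      show "f \<in> Ei i" by (rule f)
    next
      fix g assume g: "g \<in> Ei i"
      then have g': "g \<in> E" "i \<in> g" unfolding Ei_def by auto
      have "norm (\<Prod>j\<in>g - {i}. x j) = (\<Prod>j\<in>g - {i}. norm (x j))" by (simp add: prod_norm)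
      also have "\<dots> = (\<Prod>j\<in>g - {i}. M)" using allM en[OF g'(1)] by (intro prod.cong) auto
      also have "\<dots> = M ^ (m - 1)" using card_e[OF g'] by simp
      also have "\<dots> = norm (x i ^ (m - 1))" using allM[OF i] by (simp add: norm_power)
      finally show "norm (\<Prod>j\<in>g - {i}. x j) = norm (x i ^ (m - 1))" .
    next
      show "x i ^ (m - 1) \<noteq> 0" using nz i by simp
    qed
    moreover have "e \<in> Ei i" using e unfolding Ei_def by auto
    ultimately show ?thesis by simp
  qed
  then show ?thesis using nz by blast
qed



lemma proj_point_scale:
  assumes "c \<noteq> 0"
  shows "proj_point (\<lambda>i. c * x i) = proj_point x"
  unfolding proj_point_def
proof (intro set_eqI iffI)
  fix y assume "y \<in> {\<lambda>i. c' * (c * x i) |c'. c' \<noteq> 0}"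
  then obtain c' where "c' \<noteq> 0" "y = (\<lambda>i. c' * (c * x i))" by blast
  then show "y \<in> {\<lambda>i. c' * x i |c'. c' \<noteq> 0}" using assms
    by (intro CollectI exI[of _ "c' * c"]) (auto simp: mult.assoc)
next
  fix y assume "y \<in> {\<lambda>i. c' * x i |c'. c' \<noteq> 0}"
  then obtain c' where "c' \<noteq> 0" "y = (\<lambda>i. c' * x i)" by blast
  then show "y \<in> {\<lambda>i. c' * (c * x i) |c'. c' \<noteq> 0}" using assms
    by (intro CollectI exI[of _ "c' / c"]) auto
qed

lemma eig_card:
  assumes unif: "uniform_hypergraph m n E" and conn: "hg_connected n E" and m: "m \<ge> 2" and n: "n \<ge> 1"
  shows "card (eigvariety m n (lap_tensor m E) 0) = card {d. good m n E d}"
proof -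
  have ce: "card e = m" and en: "e \<subseteq> {..<n}" and fe: "finite e" if "e \<in> E" for e
    using unif that m unfolding uniform_hypergraph_def by (auto intro: card_ge_0_finite)
  define V where "V = {x \<in> cvec n. x \<noteq> (\<lambda>_. 0) \<and> (\<forall>i<n. tensor_apply m n (lap_tensor m E) x i = 0 * x i ^ (m - 1))}"
  have ev: "eigvariety m n (lap_tensor m E) 0 = proj_point ` V" unfolding eigvariety_def V_def ..
  define X where "X d = (\<lambda>i. if i < n then d i else 0)" for d :: "nat \<Rightarrow> complex"
  define G where "G d = proj_point (X d)" for d
  have XV: "X d \<in> V" if g: "good m n E d" for d
  proof -
    have "X d \<in> cvec n" unfolding cvec_def X_def by simp
    moreover have "X d 0 = 1" using g n unfolding good_def X_def by simp
    then have "X d \<noteq> (\<lambda>_. 0)" by (metis one_neq_zero)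
    moreover have "tensor_apply m n (lap_tensor m E) (X d) i = 0" if i: "i < n" for i
    proof -
      have "(\<Sum>e\<in>{e\<in>E. i \<in> e}. \<Prod>j\<in>e - {i}. X d j) = (\<Sum>e\<in>{e\<in>E. i \<in> e}. d i ^ (m - 1))"
      proof (intro sum.cong refl)
        fix e assume e: "e \<in> {e\<in>E. i \<in> e}"
        have "(\<Prod>j\<in>e - {i}. X d j) = (\<Prod>j\<in>e - {i}. d j)"
          using en e by (intro prod.cong) (auto simp: X_def)
        also have "\<dots> = d i ^ (m - 1)" using g e unfolding good_def by auto
        finally show "(\<Prod>j\<in>e - {i}. X d j) = d i ^ (m - 1)" .
      qed
      then show ?thesis using tensor_formula[OF unif m i, of "X d"] i
        by (simp add: hg_degree_def X_def)
    qed
    ultimately show ?thesis unfolding V_def by simp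
  qed
  have "bij_betw G {d. good m n E d} (eigvariety m n (lap_tensor m E) 0)"
  proof (rule bij_betw_imageI)
    show "inj_on G {d. good m n E d}"
    proof (rule inj_onI)
      fix d d' assume g: "d \<in> {d. good m n E d}" and g': "d' \<in> {d. good m n E d}" and eq: "G d = G d'"
      have "X d \<in> proj_point (X d)" unfolding proj_point_def by (intro CollectI exI[of _ 1]) simp
      then have "X d \<in> proj_point (X d')" using eq unfolding G_def by simp
      then obtain c where c: "X d = (\<lambda>i. c * X d' i)" unfolding proj_point_def by blast
      have "X d 0 = 1" "X d' 0 = 1" using g g' n unfolding good_def X_def by auto
      then have "c = 1" using fun_cong[OF c, of 0] by simp
      then have XX: "X d = X d'" using c by simp
      show "d = d'"
      proof
        fix i show "d i = d' i"
        proof (cases "i < n")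
          case True then show ?thesis using fun_cong[OF XX, of i] by (simp add: X_def)
        next
          case False then show ?thesis using g g' unfolding good_def by simp
        qed
      qed
    qed
    show "G ` {d. good m n E d} = eigvariety m n (lap_tensor m E) 0"
    proof (intro set_eqI iffI)
      fix P assume "P \<in> G ` {d. good m n E d}"
      then show "P \<in> eigvariety m n (lap_tensor m E) 0" unfolding ev G_def using XV by blast
    next
      fix P assume "P \<in> eigvariety m n (lap_tensor m E) 0"
      then obtain x where xV: "x \<in> V" and P: "P = proj_point x" unfolding ev by blast
      have x: "x \<in> cvec n" "x \<noteq> (\<lambda>_. 0)" "\<forall>i<n. tensor_apply m n (lap_tensor m E) x i = 0"
        using xV unfolding V_def by auto
      have ch: "(\<forall>i<n. x i \<noteq> 0) \<and> (\<forall>e\<in>E. \<forall>i\<in>e. x i ^ (m - 1) = (\<Prod>j\<in>e - {i}. x j))"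
        by (rule eig_char[OF unif conn m x])
      have x0: "x 0 \<noteq> 0" using ch n by simp
      define y where "y i = (if i < n then x i / x 0 else 1)" for i
      have gy: "good m n E y"
        unfolding good_def
      proof (intro conjI allI impI ballI)
        show "\<And>i. i < n \<Longrightarrow> y i \<noteq> 0" using ch x0 by (simp add: y_def)
        show "\<And>i. n \<le> i \<Longrightarrow> y i = 1" by (simp add: y_def)
        show "y 0 = 1" using x0 n by (simp add: y_def)
        fix e i assume e: "e \<in> E" and i: "i \<in> e"
        have "(\<Prod>j\<in>e - {i}. y j) = (\<Prod>j\<in>e - {i}. x j / x 0)"
          using en[OF e] by (intro prod.cong) (auto simp: y_def)
        also have "\<dots> = (\<Prod>j\<in>e - {i}. x j) / x 0 ^ card (e - {i})" by (simp add: prod_dividef)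
        also have "card (e - {i}) = m - 1" using ce[OF e] fe[OF e] i by simp
        also have "(\<Prod>j\<in>e - {i}. x j) = x i ^ (m - 1)" using ch e i by simp
        also have "x i ^ (m - 1) / x 0 ^ (m - 1) = y i ^ (m - 1)"
          using en[OF e] i by (auto simp: y_def power_divide)
        finally show "y i ^ (m - 1) = (\<Prod>j\<in>e - {i}. y j)" by simp
      qed
      have "X y = (\<lambda>i. (1 / x 0) * x i)"
      proof
        fix i show "X y i = (1 / x 0) * x i"
          using x(1) unfolding X_def y_def cvec_def by auto
      qed
      then have "G y = P" unfolding G_def P using proj_point_scale[of "1 / x 0" x] x0 by simp
      then show "P \<in> G ` {d. good m n E d}" using gy by blast
    qed
  qed
  then show ?thesis by (simp add: bij_betw_same_card)
qed



theorem theorem3p5: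
  fixes m n r :: nat and E :: "nat set set" and es :: "nat set list" and d :: "nat \<Rightarrow> int"
  assumes "m \<ge> 2" and "n \<ge> 1"
    and "uniform_hypergraph m n E" and "hg_connected n E"
    and "distinct es" and "set es = E"
    and "smith_normal_form_mod m (length es) n (incidence es) r d"
  shows "card (eigvariety m n (lap_tensor m E) 0) = stab_index m n (lap_tensor m E)
       \<and> stab_index m n (lap_tensor m E) = stab_index m n (adj_tensor m E)
       \<and> real (stab_index m n (adj_tensor m E))
           = real m powi (int n - 1 - int r) * (\<Prod>i<r. real_of_int (d i))"
proof -
  note m = assms(1) and n = assms(2) and unif = assms(3) and conn = assms(4) and es = assms(6)
    and snf = assms(7)
  have rn: "r \<le> n" using snf unfolding smith_normal_form_mod_def by simp
  have stabL: "stab_set m n (lap_tensor m E) = stab_set m n (adj_tensor m E)" by (rule stab_lap[OF unif m])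
  have stabA: "stab_set m n (adj_tensor m E) = {d. good m n E d}" by (rule stab_adj[OF unif m])
  have eig: "card (eigvariety m n (lap_tensor m E) 0) = card {d. good m n E d}" by (rule eig_card[OF unif conn m n])
  have goodR: "{d. good m n E d} = {d :: nat \<Rightarrow> complex. (\<forall>i<n. d i ^ m = 1) \<and> (\<forall>i\<ge>n. d i = 1) \<and> d 0 = 1 \<and> (\<forall>e\<in>E. (\<Prod>j\<in>e. d j) = 1)}"
    by (intro Collect_cong good_iff[OF unif conn m])
  let ?Box = "PiE {..<n} (\<lambda>_. {0..<int m})"
  let ?K = "{a \<in> ?Box. \<forall>k<length es. [mv n (incidence es) a k = 0] (mod int m)}"
  let ?Kz = "{a \<in> ?Box. a 0 = 0 \<and> (\<forall>k<length es. [mv n (incidence es) a k = 0] (mod int m))}"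
  have c1: "card {d. good m n E d} = card ?Kz" unfolding goodR by (rule roots_count[OF unif m n es])
  have rows: "(\<Sum>j<n. incidence es k j) = int m" if k: "k < length es" for k
  proof -
    have ek: "es ! k \<in> E" using k es by auto
    then have sub: "es ! k \<subseteq> {..<n}" and card: "card (es ! k) = m"
      using unif unfolding uniform_hypergraph_def by auto
    have "(\<Sum>j<n. incidence es k j) = mv n (incidence es) (\<lambda>_. 1) k" by (simp add: mv_def)
    also have "\<dots> = (\<Sum>j\<in>es ! k. 1)" by (rule mv_incidence[OF sub])
    also have "\<dots> = int m" using card by simp
    finally show ?thesis .
  qed
  have c2: "card ?K = m * card ?Kz"
    by (rule shift_count[OF rows]) (use m n in auto)
  have c3: "int (card ?K) = int m ^ (n - r) * (\<Prod>i<r. d i)"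
    by (rule snf_count[OF snf m])
  have A: "real m * real (card ?Kz) = real m ^ (n - r) * (\<Prod>i<r. real_of_int (d i))"
  proof -
    have "int m * int (card ?Kz) = int m ^ (n - r) * (\<Prod>i<r. d i)" using c2 c3 by simp
    then have "real_of_int (int m * int (card ?Kz)) = real_of_int (int m ^ (n - r) * (\<Prod>i<r. d i))" by simp
    then show ?thesis by simp
  qed
  have B: "real m powi (int n - 1 - int r) * real m = real m ^ (n - r)"
  proof -
    have e: "int n - 1 - int r = int (n - r) - 1" using rn by simp
    have "real m powi (int (n - r) - 1) * real m = real m powi int (n - r)"
      using m by (intro power_int_minus_mult) simp
    then show ?thesis unfolding e by simp
  qed
  have "real m * real (card ?Kz) = (real m powi (int n - 1 - int r) * real m) * (\<Prod>i<r. real_of_int (d i))"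
    unfolding A B ..
  also have "\<dots> = real m * (real m powi (int n - 1 - int r) * (\<Prod>i<r. real_of_int (d i)))"
    by (simp only: mult_ac)
  finally have C: "real m * real (card ?Kz) = real m * (real m powi (int n - 1 - int r) * (\<Prod>i<r. real_of_int (d i)))" .
  moreover have "real m \<noteq> 0" using m by simp
  ultimately have "real (card ?Kz) = real m powi (int n - 1 - int r) * (\<Prod>i<r. real_of_int (d i))"
    by (simp only: mult_cancel_left) simp
  then show ?thesis
    unfolding stab_index_def stabL stabA eig c1 by simp
qed

end
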